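(* Let $G$ be a compact Hausdorff group in which every element has a countable Engel sink, and suppose $G$ has an abelian closed normal subgroup $A$ such that $G/A$ is locally nilpotent. Then every element of $G$ has a finite Engel sink.
   Context: Commutators are left-normed, $[a,b]=a^{-1}b^{-1}ab$, and $[x,{}_n g]=[x,g,\dots,g]$ with $g$ repeated $n$ times. An Engel sink of an element $g$ of a group $G$ is a set $\mathscr E(g)\subseteq G$ such that for every $x\in G$ there is a positive integer $n(x,g)$ with $[x,{}_n g]\in\mathscr E(g)$ for all $n\ge n(x,g)$. "Countable" means finite or denumerable. A group is locally nilpotent if every finitely generated subgroup is nilpotent. *)

theory Defs
  imports "HOL-Analysis.Analysis" "HOL-Algebra.Algebra" "HOL-Library.Countable_Set"
begin

definition gcomm :: "('a, 'b) monoid_scheme \<Rightarrow> 'a \<Rightarrow> 'a \<Rightarrow> 'a" where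
  "gcomm G a b = inv\<^bsub>G\<^esub> a \<otimes>\<^bsub>G\<^esub> inv\<^bsub>G\<^esub> b \<otimes>\<^bsub>G\<^esub> a \<otimes>\<^bsub>G\<^esub> b"

primrec engel_comm :: "('a, 'b) monoid_scheme \<Rightarrow> 'a \<Rightarrow> 'a \<Rightarrow> nat \<Rightarrow> 'a" where
  "engel_comm G x g 0 = x"
| "engel_comm G x g (Suc n) = gcomm G (engel_comm G x g n) g"

definition engel_sink :: "('a, 'b) monoid_scheme \<Rightarrow> 'a \<Rightarrow> 'a set \<Rightarrow> bool" where
  "engel_sink G g E \<longleftrightarrow> E \<subseteq> carrier G \<and>
     (\<forall>x\<in>carrier G. \<exists>n0>0. \<forall>n\<ge>n0. engel_comm G x g n \<in> E)"

primrec lower_central :: "('a, 'b) monoid_scheme \<Rightarrow> nat \<Rightarrow> 'a set" where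
  "lower_central G 0 = carrier G"
| "lower_central G (Suc n) =
     generate G {gcomm G a b | a b. a \<in> lower_central G n \<and> b \<in> carrier G}"

definition nilpotent_group :: "('a, 'b) monoid_scheme \<Rightarrow> bool" where
  "nilpotent_group G \<longleftrightarrow> group G \<and> (\<exists>c. lower_central G c = {\<one>\<^bsub>G\<^esub>})"

definition locally_nilpotent_group :: "('a, 'b) monoid_scheme \<Rightarrow> bool" where
  "locally_nilpotent_group G \<longleftrightarrow> group G \<and>
     (\<forall>S. S \<subseteq> carrier G \<and> finite S \<longrightarrow> nilpotent_group (subgroup_generated G S))"

definition compact_hausdorff_group :: "('a, 'b) monoid_scheme \<Rightarrow> 'a topology \<Rightarrow> bool" where
  "compact_hausdorff_group G T \<longleftrightarrow> group G \<and> topspace T = carrier G \<and>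
     continuous_map (prod_topology T T) T (\<lambda>(x, y). x \<otimes>\<^bsub>G\<^esub> y) \<and>
     continuous_map T T (\<lambda>x. inv\<^bsub>G\<^esub> x) \<and>
     compact_space T \<and> Hausdorff_space T"

end

theory Submission
  imports Defs
begin


lemma gcomm_closed: "group G \<Longrightarrow> a \<in> carrier G \<Longrightarrow> b \<in> carrier G \<Longrightarrow> gcomm G a b \<in> carrier G"
  unfolding gcomm_def by (meson group.inv_closed group.is_monoid monoid.m_closed)

lemma engel_closed: "group G \<Longrightarrow> x \<in> carrier G \<Longrightarrow> g \<in> carrier G \<Longrightarrow> engel_comm G x g n \<in> carrier G"
  by (induction n) (auto simp: gcomm_closed)

lemma engel_add: "engel_comm G x g (c + m) = engel_comm G (engel_comm G x g c) g m"
  by (induction m) auto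

lemma gcomm_hom:
  assumes "group_hom G Q f" "x \<in> carrier G" "g \<in> carrier G"
  shows "f (gcomm G x g) = gcomm Q (f x) (f g)"
proof -
  interpret group_hom G Q f by fact
  have "f (gcomm G x g) = f (inv\<^bsub>G\<^esub> x) \<otimes>\<^bsub>Q\<^esub> f (inv\<^bsub>G\<^esub> g) \<otimes>\<^bsub>Q\<^esub> f x \<otimes>\<^bsub>Q\<^esub> f g"
    unfolding gcomm_def using assms(2,3) by (simp only: hom_mult G.m_closed G.inv_closed)
  also have "\<dots> = gcomm Q (f x) (f g)" unfolding gcomm_def using assms(2,3) by (simp only: hom_inv)
  finally show ?thesis .
qed

lemma engel_hom:
  assumes "group_hom G Q f" "x \<in> carrier G" "g \<in> carrier G"
  shows "f (engel_comm G x g n) = engel_comm Q (f x) (f g) n"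
proof (induction n)
  case 0 then show ?case by simp
next
  case (Suc n)
  have c: "engel_comm G x g n \<in> carrier G" using engel_closed[OF group_hom.axioms(1)[OF assms(1)] assms(2,3)] .
  show ?case using Suc gcomm_hom[OF assms(1) c assms(3)] by simp
qed

lemma engel_lower_central:
  assumes "group H" "y \<in> carrier H" "h \<in> carrier H"
  shows "engel_comm H y h n \<in> lower_central H n"
proof (induction n)
  case 0 then show ?case using assms by simp
next
  case (Suc n)
  have "gcomm H (engel_comm H y h n) h \<in> {gcomm H a b | a b. a \<in> lower_central H n \<and> b \<in> carrier H}"
    using Suc assms(3) by blast
  then show ?case unfolding engel_comm.simps lower_central.simps by (rule generate.incl)
qed

lemma engel_subgroup_generated:
  assumes "group Q" "y \<in> carrier (subgroup_generated Q S)" "h \<in> carrier (subgroup_generated Q S)"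
  shows "engel_comm (subgroup_generated Q S) y h n = engel_comm Q y h n"
proof (induction n)
  case 0 then show ?case by simp
next
  case (Suc n)
  have g: "group (subgroup_generated Q S)" using assms(1) by (rule group.group_subgroup_generated)
  have c: "engel_comm (subgroup_generated Q S) y h n \<in> carrier (subgroup_generated Q S)"
    using engel_closed[OF g assms(2,3)] .
  have "gcomm (subgroup_generated Q S) (engel_comm (subgroup_generated Q S) y h n) h
     = gcomm Q (engel_comm (subgroup_generated Q S) y h n) h"
    unfolding gcomm_def using group.inv_subgroup_generated[OF assms(1) c] group.inv_subgroup_generated[OF assms(1) assms(3)]
    by (simp only: mult_subgroup_generated)
  then show ?case using Suc by simp
qed



lemma eventually_in_A:
  assumes "group G" "A \<lhd> G" "locally_nilpotent_group (G Mod A)"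
    "x \<in> carrier G" "g \<in> carrier G"
  shows "\<exists>c. engel_comm G x g c \<in> A"
proof -
  interpret group G by fact
  interpret normal A G by fact
  define Q where "Q = G Mod A"
  have gQ: "group Q" unfolding Q_def by (rule factorgroup_is_group)
  have hom: "group_hom G Q (\<lambda>a. A #>\<^bsub>G\<^esub> a)"
    unfolding Q_def using r_coset_hom_Mod factorgroup_is_group
    by (simp add: group_hom_def group_hom_axioms_def is_group)
  define S where "S = {A #>\<^bsub>G\<^esub> x, A #>\<^bsub>G\<^esub> g}"
  have Ssub: "S \<subseteq> carrier Q" using group_hom.hom_closed[OF hom] assms(4,5) by (auto simp: S_def)
  have finS: "finite S" by (simp add: S_def)
  define H where "H = subgroup_generated Q S"
  have "\<forall>S. S \<subseteq> carrier Q \<and> finite S \<longrightarrow> nilpotent_group (subgroup_generated Q S)"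
    using assms(3) unfolding Q_def locally_nilpotent_group_def by blast
  then have "nilpotent_group H" using Ssub finS unfolding H_def by blast
  then obtain c where c: "lower_central H c = {\<one>\<^bsub>H\<^esub>}" unfolding nilpotent_group_def by blast
  have inH: "s \<in> carrier H" if "s \<in> S" for s
    using that Ssub unfolding H_def carrier_subgroup_generated by (auto intro: generate.incl)
  have xH: "A #>\<^bsub>G\<^esub> x \<in> carrier H" and gH: "A #>\<^bsub>G\<^esub> g \<in> carrier H" using inH S_def by auto
  have gH': "group H" unfolding H_def using group.group_subgroup_generated[OF gQ] .
  have "engel_comm H (A #>\<^bsub>G\<^esub> x) (A #>\<^bsub>G\<^esub> g) c \<in> lower_central H c"
    by (rule engel_lower_central[OF gH' xH gH])
  then have "engel_comm H (A #>\<^bsub>G\<^esub> x) (A #>\<^bsub>G\<^esub> g) c = \<one>\<^bsub>Q\<^esub>" using c unfolding H_def by simp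
  moreover have "engel_comm H (A #>\<^bsub>G\<^esub> x) (A #>\<^bsub>G\<^esub> g) c = engel_comm Q (A #>\<^bsub>G\<^esub> x) (A #>\<^bsub>G\<^esub> g) c"
    using engel_subgroup_generated[OF gQ xH[unfolded H_def] gH[unfolded H_def]] unfolding H_def .
  moreover have "engel_comm Q (A #>\<^bsub>G\<^esub> x) (A #>\<^bsub>G\<^esub> g) c = A #>\<^bsub>G\<^esub> engel_comm G x g c"
    using engel_hom[OF hom assms(4,5)] by simp
  ultimately have "A #>\<^bsub>G\<^esub> engel_comm G x g c = A" unfolding Q_def by simp
  then have "engel_comm G x g c \<in> A"
    by (rule coset_join1[OF _ engel_closed[OF is_group assms(4,5)] is_subgroup])
  then show ?thesis by blast
qed



context normal begin

lemma gcomm_in: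
  assumes "g \<in> carrier G" "a \<in> H"
  shows "gcomm G a g \<in> H"
proof -
  have "gcomm G a g = inv a \<otimes> (inv g \<otimes> a \<otimes> g)" unfolding gcomm_def using assms by (simp add: m_assoc)
  moreover have "inv g \<otimes> a \<otimes> g \<in> H" using assms by (rule inv_op_closed1)
  ultimately show ?thesis using assms by (simp add: subgroup.m_inv_closed[OF is_subgroup])
qed

lemma gcomm_mult:
  assumes comm: "\<forall>a\<in>H. \<forall>b\<in>H. a \<otimes> b = b \<otimes> a" and g: "g \<in> carrier G" and a: "a \<in> H" and b: "b \<in> H"
  shows "gcomm G (a \<otimes> b) g = gcomm G a g \<otimes> gcomm G b g"
proof -
  define a' where "a' = inv g \<otimes> a \<otimes> g"
  define b' where "b' = inv g \<otimes> b \<otimes> g"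
  have a'H: "a' \<in> H" unfolding a'_def using g a by (rule inv_op_closed1)
  have b'H: "b' \<in> H" unfolding b'_def using g b by (rule inv_op_closed1)
  have iaH: "inv a \<in> H" using a by (simp add: subgroup.m_inv_closed[OF is_subgroup])
  have ibH: "inv b \<in> H" using b by (simp add: subgroup.m_inv_closed[OF is_subgroup])
  have ac: "a \<in> carrier G" "b \<in> carrier G" "a' \<in> carrier G" "b' \<in> carrier G" "inv a \<in> carrier G" "inv b \<in> carrier G"
    using a b a'H b'H iaH ibH subset by auto
  have cancel: "g \<otimes> (inv g \<otimes> y) = y" if "y \<in> carrier G" for y
    using g that by (simp add: m_assoc[symmetric])
  have L: "gcomm G (a \<otimes> b) g = inv b \<otimes> inv a \<otimes> (a' \<otimes> b')"
    unfolding gcomm_def a'_def b'_def using g ac by (simp add: m_assoc inv_mult_group cancel)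
  have R: "gcomm G a g \<otimes> gcomm G b g = inv a \<otimes> a' \<otimes> (inv b \<otimes> b')"
    unfolding gcomm_def a'_def b'_def using g ac by (simp add: m_assoc)
  have c1: "inv b \<otimes> inv a = inv a \<otimes> inv b" using comm iaH ibH by blast
  have c2: "inv b \<otimes> a' = a' \<otimes> inv b" using comm a'H ibH by blast
  have "inv b \<otimes> inv a \<otimes> (a' \<otimes> b') = inv a \<otimes> inv b \<otimes> (a' \<otimes> b')" using c1 by simp
  also have "\<dots> = inv a \<otimes> (inv b \<otimes> a') \<otimes> b'" using ac by (simp add: m_assoc)
  also have "\<dots> = inv a \<otimes> (a' \<otimes> inv b) \<otimes> b'" using c2 by simp
  also have "\<dots> = inv a \<otimes> a' \<otimes> (inv b \<otimes> b')" using ac by (simp add: m_assoc)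
  finally show ?thesis using L R by simp
qed

lemma engel_in:
  assumes "g \<in> carrier G" "a \<in> H"
  shows "engel_comm G a g n \<in> H"
  by (induction n) (auto simp: assms gcomm_in)

lemma engel_mult:
  assumes comm: "\<forall>a\<in>H. \<forall>b\<in>H. a \<otimes> b = b \<otimes> a" and g: "g \<in> carrier G" and a: "a \<in> H" and b: "b \<in> H"
  shows "engel_comm G (a \<otimes> b) g n = engel_comm G a g n \<otimes> engel_comm G b g n"
proof (induction n)
  case 0 then show ?case by simp
next
  case (Suc n)
  show ?case using Suc gcomm_mult[OF comm g engel_in[OF g a] engel_in[OF g b]] by simp
qed

end

lemma (in group) engel_one:
  assumes "g \<in> carrier G" shows "engel_comm G \<one> g n = \<one>"
proof (induction n)
  case 0 then show ?case by simp
next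
  case (Suc n)
  then show ?case using assms by (simp add: gcomm_def)
qed

lemma cont_mult:
  assumes "compact_hausdorff_group G T" "continuous_map T T f" "continuous_map T T h"
  shows "continuous_map T T (\<lambda>x. f x \<otimes>\<^bsub>G\<^esub> h x)"
proof -
  have m: "continuous_map (prod_topology T T) T (\<lambda>(x,y). x \<otimes>\<^bsub>G\<^esub> y)"
    using assms(1) unfolding compact_hausdorff_group_def by blast
  have "continuous_map T (prod_topology T T) (\<lambda>x. (f x, h x))"
    using assms(2,3) by (rule continuous_map_pairedI)
  from continuous_map_compose[OF this m] show ?thesis by (simp add: o_def)
qed

lemma cont_inv:
  assumes "compact_hausdorff_group G T" "continuous_map T T f"
  shows "continuous_map T T (\<lambda>x. inv\<^bsub>G\<^esub> (f x))"
proof -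
  have m: "continuous_map T T (\<lambda>x. inv\<^bsub>G\<^esub> x)"
    using assms(1) unfolding compact_hausdorff_group_def by blast
  from continuous_map_compose[OF assms(2) m] show ?thesis by (simp add: o_def)
qed

lemma cont_engel:
  assumes "compact_hausdorff_group G T" "g \<in> carrier G"
  shows "continuous_map T T (\<lambda>x. engel_comm G x g n)"
proof (induction n)
  case 0 then show ?case by simp
next
  case (Suc n)
  have gT: "g \<in> topspace T" using assms unfolding compact_hausdorff_group_def by simp
  have cg: "continuous_map T T (\<lambda>x. g)" using gT by simp
  have cig: "continuous_map T T (\<lambda>x. inv\<^bsub>G\<^esub> g)" using cont_inv[OF assms(1) cg] .
  show ?case unfolding engel_comm.simps gcomm_def
    by (intro cont_mult[OF assms(1)] cont_inv[OF assms(1)] Suc cig cg)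
qed



lemma (in normal) core:
  assumes ch: "compact_hausdorff_group G T" and cl: "closedin T H"
    and comm: "\<forall>a\<in>H. \<forall>b\<in>H. a \<otimes>\<^bsub>G\<^esub> b = b \<otimes>\<^bsub>G\<^esub> a" and g: "g \<in> carrier G"
    and E: "countable E" and sink: "\<forall>a\<in>H. \<exists>n. engel_comm G a g n \<in> E"
  shows "\<exists>N. finite ((\<lambda>a. engel_comm G a g N) ` H)"
proof -
  have top: "topspace T = carrier G" and comp: "compact_space T" and haus: "Hausdorff_space T"
    using ch unfolding compact_hausdorff_group_def by auto
  define Xs where "Xs = subtopology T H"
  have AT: "H \<subseteq> topspace T" using subset top by simp
  have tX: "topspace Xs = H" unfolding Xs_def using AT by (simp add: topspace_subtopology Int_absorb1)
  have cX: "compact_space Xs" unfolding Xs_def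
    by (rule compact_space_subtopology[OF closedin_compact_space[OF comp cl]])
  have hX: "Hausdorff_space Xs" unfolding Xs_def using haus by (rule Hausdorff_space_subtopology)
  have lc: "locally_compact_space Xs" using cX by (rule compact_imp_locally_compact_space)
  have reg: "regular_space Xs" using cX hX by (rule compact_Hausdorff_imp_regular_space)
  define \<psi> where "\<psi> n a = engel_comm G a g n" for n a
  have contX: "continuous_map Xs T (\<psi> n)" for n
    unfolding Xs_def \<psi>_def by (rule continuous_map_from_subtopology[OF cont_engel[OF ch g]])
  define \<G> where "\<G> = (\<lambda>(n,e). {a \<in> topspace Xs. \<psi> n a \<in> {e}}) ` (UNIV \<times> (E \<inter> carrier G))"
  have cG: "countable \<G>" unfolding \<G>_def using E by auto
  have closedG: "closedin Xs C" if CG: "C \<in> \<G>" for C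
  proof -
    obtain p where Cp: "C = (\<lambda>(n,e). {a \<in> topspace Xs. \<psi> n a \<in> {e}}) p" and p: "p \<in> UNIV \<times> (E \<inter> carrier G)"
      by (rule imageE[OF CG[unfolded \<G>_def]])
    obtain n e where pne: "p = (n, e)" by (cases p)
    have C: "C = {a \<in> topspace Xs. \<psi> n a \<in> {e}}" using Cp pne by simp
    have e: "e \<in> carrier G" using p pne by simp
    have "closedin T {e}" using haus e top by (simp add: closedin_Hausdorff_singleton)
    then show ?thesis unfolding C by (rule closedin_continuous_map_preimage[OF contX])
  qed
  have unionG: "\<Union>\<G> = topspace Xs"
  proof
    show "\<Union>\<G> \<subseteq> topspace Xs"
    proof (rule Union_least)
      fix C assume "C \<in> \<G>" then show "C \<subseteq> topspace Xs" by (rule closedin_subset[OF closedG])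
    qed
    show "topspace Xs \<subseteq> \<Union>\<G>"
    proof
      fix a assume a: "a \<in> topspace Xs"
      then have aA: "a \<in> H" using tX by simp
      then obtain n where n: "engel_comm G a g n \<in> E" using sink by blast
      have aG: "a \<in> carrier G" using subset aA by (rule subsetD)
      have "engel_comm G a g n \<in> carrier G" using engel_closed[OF is_group aG g] .
      then have "a \<in> (\<lambda>(n,e). {a \<in> topspace Xs. \<psi> n a \<in> {e}}) (n, \<psi> n a)" "(n, \<psi> n a) \<in> UNIV \<times> (E \<inter> carrier G)"
        using a n unfolding \<psi>_def by auto
      then have "(\<lambda>(n,e). {a \<in> topspace Xs. \<psi> n a \<in> {e}}) (n, \<psi> n a) \<in> \<G>"
        unfolding \<G>_def by (intro imageI)
      then show "a \<in> \<Union>\<G>" using \<open>a \<in> (\<lambda>(n,e). {a \<in> topspace Xs. \<psi> n a \<in> {e}}) (n, \<psi> n a)\<close> by (rule UnionI)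
    qed
  qed
  have oneX: "\<one> \<in> topspace Xs" using tX subgroup.one_closed[OF is_subgroup] by simp
  have ne: "Xs interior_of \<Union>\<G> \<noteq> {}"
    unfolding unionG interior_of_topspace using oneX by (intro notI) simp
  have "\<exists>C\<in>\<G>. Xs interior_of C \<noteq> {}"
  proof (rule ccontr)
    assume na: "\<not> (\<exists>C\<in>\<G>. Xs interior_of C \<noteq> {})"
    have "Xs interior_of \<Union>\<G> = {}"
    proof (rule Baire_category_alt)
      show "completely_metrizable_space Xs \<or> locally_compact_space Xs \<and> regular_space Xs" using lc reg by simp
      show "countable \<G>" by (rule cG)
      fix W assume W: "W \<in> \<G>"
      show "closedin Xs W \<and> Xs interior_of W = {}"
      proof
        show "closedin Xs W" using W by (rule closedG)
        show "Xs interior_of W = {}" using W na by (simp only: bex_simps) simp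
      qed
    qed
    then show False using ne by simp
  qed
  then obtain C where CG: "C \<in> \<G>" and neC: "Xs interior_of C \<noteq> {}" by (elim bexE)
  obtain p where Cp: "C = (\<lambda>(n,e). {a \<in> topspace Xs. \<psi> n a \<in> {e}}) p" and p: "p \<in> UNIV \<times> (E \<inter> carrier G)"
    by (rule imageE[OF CG[unfolded \<G>_def]])
  obtain n e where pne: "p = (n, e)" by (cases p)
  have nei: "Xs interior_of {a \<in> topspace Xs. \<psi> n a \<in> {e}} \<noteq> {}" using neC Cp pne by simp
  have e: "e \<in> carrier G" using p pne by simp
  define V where "V = Xs interior_of {a \<in> topspace Xs. \<psi> n a \<in> {e}}"
  have oV: "openin Xs V" unfolding V_def by (rule openin_interior_of)
  have VC: "V \<subseteq> {a \<in> H. \<psi> n a = e}" using interior_of_subset[of Xs "{a \<in> topspace Xs. \<psi> n a \<in> {e}}"] tX unfolding V_def by auto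
  obtain a0 where a0V: "a0 \<in> V" using nei unfolding V_def by blast
  have a0A: "a0 \<in> H" and a0e: "\<psi> n a0 = e" using a0V VC by auto
  have a0G: "a0 \<in> carrier G" using a0A subset by blast
  define U where "U b = {x \<in> topspace Xs. a0 \<otimes> inv b \<otimes> x \<in> V}" for b
  have oU: "openin Xs (U b)" if bA: "b \<in> H" for b
  proof -
    have bG: "b \<in> carrier G" using bA subset by blast
    have gT: "a0 \<otimes> inv b \<in> topspace T" using a0G bG top by simp
    have c1: "continuous_map T T (\<lambda>x. a0 \<otimes> inv b \<otimes> x)"
    proof (rule cont_mult[OF ch])
      show "continuous_map T T (\<lambda>x. a0 \<otimes> inv b)" using gT by (simp only: continuous_map_const) simp
      show "continuous_map T T (\<lambda>x. x)" by (rule continuous_map_id[unfolded id_def])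
    qed
    have "continuous_map Xs T (\<lambda>x. a0 \<otimes> inv b \<otimes> x)"
      unfolding Xs_def by (rule continuous_map_from_subtopology[OF c1])
    moreover have "(\<lambda>x. a0 \<otimes> inv b \<otimes> x) \<in> topspace Xs \<rightarrow> H"
    proof
      fix x assume "x \<in> topspace Xs"
      then have "x \<in> H" using tX by simp
      moreover have "a0 \<otimes> inv b \<in> H"
        using a0A bA by (intro subgroup.m_closed[OF is_subgroup] subgroup.m_inv_closed[OF is_subgroup])
      ultimately show "a0 \<otimes> inv b \<otimes> x \<in> H" by (rule subgroup.m_closed[OF is_subgroup, rotated])
    qed
    ultimately have "continuous_map Xs Xs (\<lambda>x. a0 \<otimes> inv b \<otimes> x)"
      unfolding Xs_def by (rule continuous_map_into_subtopology)
    then show ?thesis unfolding U_def using oV by (rule openin_continuous_map_preimage)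
  qed
  have cover: "topspace Xs \<subseteq> \<Union>(U ` H)"
  proof
    fix b assume "b \<in> topspace Xs"
    then have bA: "b \<in> H" using tX by simp
    then have bG: "b \<in> carrier G" using subset by blast
    have "a0 \<otimes> inv b \<otimes> b = a0" using a0G bG by (simp add: m_assoc)
    then have "b \<in> U b" unfolding U_def using a0V \<open>b \<in> topspace Xs\<close> by simp
    then show "b \<in> \<Union>(U ` H)" using bA by blast
  qed
  have "compactin Xs (topspace Xs)" using cX by (simp add: compact_space_def)
  then obtain \<V> where fV: "finite \<V>" and VU: "\<V> \<subseteq> U ` H" and cov: "topspace Xs \<subseteq> \<Union>\<V>"
  proof -
    have "\<forall>W\<in>U ` H. openin Xs W" using oU by blast
    with \<open>compactin Xs (topspace Xs)\<close> cover show ?thesis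
      using that unfolding compactin_def by meson
  qed
  obtain B where BA: "B \<subseteq> H" and fB: "finite B" and VB: "\<V> = U ` B"
    using finite_subset_image[OF fV VU] by blast
  have "\<psi> n ` H \<subseteq> \<psi> n ` B"
  proof
    fix y assume "y \<in> \<psi> n ` H"
    then obtain x where xA: "x \<in> H" and y: "y = \<psi> n x" by blast
    obtain b where bB: "b \<in> B" and xU: "x \<in> U b" using cov xA tX VB by auto
    have bA: "b \<in> H" using bB BA by blast
    define v where "v = a0 \<otimes> inv b \<otimes> x"
    have vV: "v \<in> V" using xU unfolding U_def v_def by simp
    have vA: "v \<in> H" and ve: "\<psi> n v = e" using vV VC by auto
    have bG: "b \<in> carrier G" and xG: "x \<in> carrier G" using bA xA subset by auto
    have ia0A: "inv a0 \<in> H" using a0A by (rule subgroup.m_inv_closed[OF is_subgroup])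
    have "inv a0 \<otimes> v = inv b \<otimes> x" unfolding v_def using a0G bG xG by (simp add: m_assoc[symmetric])
    then have xeq: "x = b \<otimes> (inv a0 \<otimes> v)" using bG xG by (simp add: m_assoc[symmetric])
    have "\<psi> n x = \<psi> n b \<otimes> (\<psi> n (inv a0) \<otimes> \<psi> n v)"
      unfolding xeq \<psi>_def
      using engel_mult[OF comm g bA subgroup.m_closed[OF is_subgroup ia0A vA]]
        engel_mult[OF comm g ia0A vA] by simp
    also have "\<psi> n (inv a0) \<otimes> \<psi> n v = \<psi> n (inv a0 \<otimes> a0)"
      using engel_mult[OF comm g ia0A a0A] ve a0e unfolding \<psi>_def by simp
    also have "\<dots> = \<one>" using a0G g by (simp add: \<psi>_def engel_one)
    also have "\<psi> n b \<otimes> \<one> = \<psi> n b" unfolding \<psi>_def using engel_closed[OF is_group bG g] by simp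
    finally show "y \<in> \<psi> n ` B" using y bB by blast
  qed
  then have "finite (\<psi> n ` H)" using fB finite_subset by blast
  then show ?thesis unfolding \<psi>_def by blast
qed



theorem lemma8p3:
  fixes G :: "('a, 'b) monoid_scheme" and T :: "'a topology" and A :: "'a set"
  assumes "compact_hausdorff_group G T"
    and "\<forall>g\<in>carrier G. \<exists>E. countable E \<and> engel_sink G g E"
    and "A \<lhd> G" and "closedin T A"
    and "\<forall>a\<in>A. \<forall>b\<in>A. a \<otimes>\<^bsub>G\<^esub> b = b \<otimes>\<^bsub>G\<^esub> a"
    and "locally_nilpotent_group (G Mod A)"
  shows "\<forall>g\<in>carrier G. \<exists>E. finite E \<and> engel_sink G g E"
proof
  fix g assume g: "g \<in> carrier G"
  have grp: "group G" using assms(1) unfolding compact_hausdorff_group_def by simp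
  interpret normal A G by (rule assms(3))
  obtain E where E: "countable E" "engel_sink G g E" using assms(2) g by blast
  have sinkA: "\<forall>a\<in>A. \<exists>n. engel_comm G a g n \<in> E"
  proof
    fix a assume "a \<in> A"
    then have aG: "a \<in> carrier G" using subset by (simp add: subsetD)
    then obtain n0 where "\<forall>n\<ge>n0. engel_comm G a g n \<in> E"
      using E(2) unfolding engel_sink_def by blast
    then show "\<exists>n. engel_comm G a g n \<in> E" by blast
  qed
  obtain N where fin: "finite ((\<lambda>a. engel_comm G a g N) ` A)"
    using core[OF assms(1) assms(4) assms(5) g E(1) sinkA] by blast
  define F where "F = (\<lambda>a. engel_comm G a g N) ` A"
  have "engel_sink G g F"
    unfolding engel_sink_def
  proof
    show "F \<subseteq> carrier G"
    proof
      fix y assume "y \<in> F"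
      then obtain a where aA: "a \<in> A" and y: "y = engel_comm G a g N" unfolding F_def by blast
      have "y \<in> A" unfolding y using g aA by (rule engel_in)
      then show "y \<in> carrier G" using subset by (simp add: subsetD)
    qed
    show "\<forall>x\<in>carrier G. \<exists>n0>0. \<forall>n\<ge>n0. engel_comm G x g n \<in> F"
    proof
      fix x assume x: "x \<in> carrier G"
      obtain c where c: "engel_comm G x g c \<in> A"
        using eventually_in_A[OF grp assms(3) assms(6) x g] by blast
      have "\<forall>n\<ge>c + N + 1. engel_comm G x g n \<in> F"
      proof (intro allI impI)
        fix n assume n: "c + N + 1 \<le> n"
        define k where "k = n - c - N"
        have nk: "n = c + (k + N)" using n unfolding k_def by simp
        have "engel_comm G x g n = engel_comm G (engel_comm G (engel_comm G x g c) g k) g N"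
          unfolding nk engel_add ..
        moreover have "engel_comm G (engel_comm G x g c) g k \<in> A" using g c by (rule engel_in)
        ultimately show "engel_comm G x g n \<in> F" unfolding F_def by blast
      qed
      then show "\<exists>n0>0. \<forall>n\<ge>n0. engel_comm G x g n \<in> F" by (intro exI[of _ "c + N + 1"]) simp
    qed
  qed
  then show "\<exists>E. finite E \<and> engel_sink G g E" using fin unfolding F_def by blast
qed

end
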